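(* Assume the high-level cost is $H(x,u,\theta)=L(x,u,\theta)+B(\theta)$ with $B(\theta)=\sum_j-\ln(g_j(\theta))$, where $g(\theta)\ge0\iff\theta\in\mathcal{T}$ and $\mathcal{T}\subset\mathbb{R}^c$ is compact. Let $H_k(\theta)=J^L(x_0^k,\theta)+B(\theta)$, let $\theta$ be a point at which $H_k$ is finite, and let $p$ be a descent direction for $H_k$ at $\theta$, i.e. $\nabla_\theta H_k(\theta)^Tp<0$. Then for constants $0<c_1<c_2<1$ there exists $\alpha>0$ satisfying the Wolfe conditions $H_k(\theta+\alpha p)\le H_k(\theta)+c_1\alpha\nabla_\theta H_k(\theta)^Tp$ and $\nabla_\theta H_k(\theta+\alpha p)^Tp\ge c_2\nabla_\theta H_k(\theta)^Tp$.
   Context: $J^L(x_0,\theta)$ is the optimal value of the low-level MPC program $\min_{x,u}L(x,u,\theta)$ s.t. $(x,u)\in\mathcal{C}(\theta)$, $x_{i+1}=f(x_i,u_i,\theta)$ with initial condition $x_0$; $x_0^k$ is the initial condition at time step $k$. *)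

theory Defs
  imports "HOL-Analysis.Analysis" "HOL-Library.Extended_Real"
begin

definition mpc_feasible ::
  "('x \<Rightarrow> 'u \<Rightarrow> 'p \<Rightarrow> 'x) \<Rightarrow> ('p \<Rightarrow> ((nat \<Rightarrow> 'x) \<times> (nat \<Rightarrow> 'u)) set)
   \<Rightarrow> nat \<Rightarrow> 'x \<Rightarrow> 'p \<Rightarrow> (nat \<Rightarrow> 'x) \<Rightarrow> (nat \<Rightarrow> 'u) \<Rightarrow> bool" where
  "mpc_feasible f C N x0 \<theta> x u \<longleftrightarrow>
     x 0 = x0 \<and> (x, u) \<in> C \<theta> \<and> (\<forall>i<N. x (Suc i) = f (x i) (u i) \<theta>)"

text \<open>Optimal value J^L(x0, theta) (extended real: +infinity if infeasible).\<close>
definition JL ::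
  "((nat \<Rightarrow> 'x) \<Rightarrow> (nat \<Rightarrow> 'u) \<Rightarrow> 'p \<Rightarrow> real) \<Rightarrow> ('x \<Rightarrow> 'u \<Rightarrow> 'p \<Rightarrow> 'x)
   \<Rightarrow> ('p \<Rightarrow> ((nat \<Rightarrow> 'x) \<times> (nat \<Rightarrow> 'u)) set) \<Rightarrow> nat \<Rightarrow> 'x \<Rightarrow> 'p \<Rightarrow> ereal" where
  "JL L f C N x0 \<theta> =
     (INF xu \<in> {(x, u). mpc_feasible f C N x0 \<theta> x u}. ereal (L (fst xu) (snd xu) \<theta>))"

definition barrier :: "(nat \<Rightarrow> 'p \<Rightarrow> real) \<Rightarrow> nat \<Rightarrow> 'p \<Rightarrow> ereal" where
  "barrier g m \<theta> =
     (if (\<forall>j<m. g j \<theta> > 0) then ereal (\<Sum>j<m. - ln (g j \<theta>)) else \<infinity>)"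

definition Hk ::
  "((nat \<Rightarrow> 'x) \<Rightarrow> (nat \<Rightarrow> 'u) \<Rightarrow> 'p \<Rightarrow> real) \<Rightarrow> ('x \<Rightarrow> 'u \<Rightarrow> 'p \<Rightarrow> 'x)
   \<Rightarrow> ('p \<Rightarrow> ((nat \<Rightarrow> 'x) \<times> (nat \<Rightarrow> 'u)) set) \<Rightarrow> nat \<Rightarrow> 'x
   \<Rightarrow> (nat \<Rightarrow> 'p \<Rightarrow> real) \<Rightarrow> nat \<Rightarrow> 'p \<Rightarrow> ereal" where
  "Hk L f C N x0 g m \<theta> = JL L f C N x0 \<theta> + barrier g m \<theta>"

definition dHk ::
  "((nat \<Rightarrow> 'x) \<Rightarrow> (nat \<Rightarrow> 'u) \<Rightarrow> 'p::real_normed_vector \<Rightarrow> real) \<Rightarrow> ('x \<Rightarrow> 'u \<Rightarrow> 'p \<Rightarrow> 'x)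
   \<Rightarrow> ('p \<Rightarrow> ((nat \<Rightarrow> 'x) \<times> (nat \<Rightarrow> 'u)) set) \<Rightarrow> nat \<Rightarrow> 'x
   \<Rightarrow> (nat \<Rightarrow> 'p \<Rightarrow> real) \<Rightarrow> nat \<Rightarrow> 'p \<Rightarrow> 'p \<Rightarrow> real" where
  "dHk L f C N x0 g m \<theta> p =
     frechet_derivative (\<lambda>t. real_of_ereal (Hk L f C N x0 g m t)) (at \<theta>) p"

end

theory Submission
  imports Defs
begin

theorem lemma4:
  fixes L :: "(nat \<Rightarrow> 'x) \<Rightarrow> (nat \<Rightarrow> 'u) \<Rightarrow> real^'c \<Rightarrow> real"
    and f :: "'x \<Rightarrow> 'u \<Rightarrow> real^'c \<Rightarrow> 'x"
    and C :: "real^'c \<Rightarrow> ((nat \<Rightarrow> 'x) \<times> (nat \<Rightarrow> 'u)) set"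
    and N :: nat and x0k :: 'x
    and g :: "nat \<Rightarrow> real^'c \<Rightarrow> real" and m :: nat
    and T U :: "(real^'c) set"
    and \<theta> p :: "real^'c" and c1 c2 :: real
  assumes T_compact: "compact T"
    and U_open: "open U" and TU: "T \<subseteq> U"
    and g_T: "\<forall>t. (\<forall>j<m. g j t \<ge> 0) \<longleftrightarrow> t \<in> T"
    and g_diff: "\<forall>j<m. \<forall>t\<in>U. g j differentiable (at t)"
    and JL_finite: "\<forall>t\<in>U. \<bar>JL L f C N x0k t\<bar> \<noteq> \<infinity>"
    and JL_diff: "\<forall>t\<in>U. (\<lambda>s. real_of_ereal (JL L f C N x0k s)) differentiable (at t)"
    and H_finite: "\<bar>Hk L f C N x0k g m \<theta>\<bar> \<noteq> \<infinity>"
    and descent: "dHk L f C N x0k g m \<theta> p < 0"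
    and c: "0 < c1" "c1 < c2" "c2 < 1"
  shows "\<exists>\<alpha>>0.
           Hk L f C N x0k g m (\<theta> + \<alpha> *\<^sub>R p)
             \<le> Hk L f C N x0k g m \<theta> + ereal (c1 * \<alpha> * dHk L f C N x0k g m \<theta> p)
         \<and> dHk L f C N x0k g m (\<theta> + \<alpha> *\<^sub>R p) p \<ge> c2 * dHk L f C N x0k g m \<theta> p"
proof -
  define JR where "JR = (\<lambda>s. real_of_ereal (JL L f C N x0k s))"
  define F where "F = (\<lambda>t. real_of_ereal (Hk L f C N x0k g m t))"
  define D where "D = U \<inter> {t. \<forall>j<m. 0 < g j t}"
  define F' where "F' = (\<lambda>t. frechet_derivative F (at t))"
  have dH: "\<And>t q. dHk L f C N x0k g m t q = F' t q" by (simp add: dHk_def F_def F'_def)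
  have HkD: "Hk L f C N x0k g m t = ereal (JR t + (\<Sum>j<m. - ln (g j t)))" if "t \<in> D" for t
  proof -
    have "t \<in> U" using that D_def by auto
    then have "JL L f C N x0k t = ereal (JR t)" using JL_finite JR_def by (simp add: ereal_real')
    then show ?thesis using that unfolding Hk_def barrier_def D_def by simp
  qed
  have FD: "F t = JR t + (\<Sum>j<m. - ln (g j t))" if "t \<in> D" for t
    using HkD[OF that] F_def by simp
  have DT: "D \<subseteq> T" using g_T D_def by (auto simp: less_imp_le)
  have gcont: "isCont (g j) t" if "j < m" "t \<in> U" for j t
    using g_diff that differentiable_imp_continuous_within by blast
  have openD: "open D"
  proof -
    have "D = U \<inter> (\<Inter>j\<in>{..<m}. U \<inter> g j -` {0<..})" unfolding D_def by auto
    moreover have "open (U \<inter> g j -` {0<..})" if "j < m" for j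
      by (rule continuous_open_preimage) (auto intro!: continuous_at_imp_continuous_on gcont that U_open)
    then have "open (\<Inter>j\<in>{..<m}. U \<inter> g j -` {0<..})" by (intro open_INT) auto
    ultimately show ?thesis using U_open by (metis open_Int)
  qed
  have thetaD: "\<theta> \<in> D"
  proof (rule ccontr)
    assume "\<theta> \<notin> D"
    moreover have "(\<forall>j<m. 0 < g j \<theta>) \<Longrightarrow> \<theta> \<in> U" using g_T TU by (auto simp: less_imp_le)
    ultimately have "\<not> (\<forall>j<m. 0 < g j \<theta>)" using D_def by auto
    then have "Hk L f C N x0k g m \<theta> = \<infinity>" unfolding Hk_def barrier_def by auto
    then show False using H_finite by simp
  qed
  have deriv: "(F has_derivative F' t) (at t)" if "t \<in> D" for t
  proof -
    have tU: "t \<in> U" and gp: "\<forall>j<m. 0 < g j t" using that D_def by auto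
    have "(\<lambda>s. JR s + (\<Sum>j<m. - ln (g j s))) differentiable at t"
    proof (intro differentiable_add differentiable_sum ballI differentiable_minus)
      show "JR differentiable at t" using JL_diff tU JR_def by simp
    next
      fix j assume "j \<in> {..<m}"
      then have j: "j < m" by simp
      then obtain G' where "(g j has_derivative G') (at t)" using g_diff tU differentiable_def by blast
      from has_derivative_ln[OF _ this] gp j show "(\<lambda>s. ln (g j s)) differentiable at t"
        using differentiableI by blast
    qed simp
    then obtain Dh where Dh: "((\<lambda>s. JR s + (\<Sum>j<m. - ln (g j s))) has_derivative Dh) (at t)"
      using differentiable_def by blast
    have "(F has_derivative Dh) (at t)"
      by (rule has_derivative_transform_within_open[OF Dh openD that]) (simp add: FD)
    moreover then have "Dh = F' t" unfolding F'_def by (rule frechet_derivative_at)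
    ultimately show ?thesis by simp
  qed
  have phider: "((\<lambda>\<alpha>. F (\<theta> + \<alpha> *\<^sub>R p)) has_real_derivative F' (\<theta> + \<alpha> *\<^sub>R p) p) (at \<alpha>)"
    if "\<theta> + \<alpha> *\<^sub>R p \<in> D" for \<alpha>
  proof -
    have lin: "linear (F' (\<theta> + \<alpha> *\<^sub>R p))" using deriv[OF that] has_derivative_linear by blast
    have inner: "((\<lambda>\<alpha>. \<theta> + \<alpha> *\<^sub>R p) has_derivative (\<lambda>x. x *\<^sub>R p)) (at \<alpha>)"
      by (auto intro!: derivative_eq_intros)
    have "((\<lambda>\<alpha>. F (\<theta> + \<alpha> *\<^sub>R p)) has_derivative (\<lambda>x. F' (\<theta> + \<alpha> *\<^sub>R p) (x *\<^sub>R p))) (at \<alpha>)"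
      using has_derivative_compose[OF inner deriv[OF that]] .
    then show ?thesis
      by (rule has_derivative_imp_has_field_derivative) (simp add: linear_scale[OF lin])
  qed

  have JRcont: "continuous_on T JR"
    using JL_diff TU JR_def by (auto intro!: continuous_at_imp_continuous_on differentiable_imp_continuous_within)
  obtain K where K: "\<forall>t\<in>T. \<bar>JR t\<bar> \<le> K"
    using compact_imp_bounded[OF compact_continuous_image[OF JRcont T_compact]] bounded_real by auto
  have gscont: "continuous_on T (\<lambda>t. \<Sum>j<m. \<bar>g j t\<bar>)"
    using TU gcont by (auto intro!: continuous_at_imp_continuous_on continuous_intros)
  obtain B where B: "\<forall>t\<in>T. \<bar>\<Sum>j<m. \<bar>g j t\<bar>\<bar> \<le> B"
    using compact_imp_bounded[OF compact_continuous_image[OF gscont T_compact]] bounded_real by auto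
  define G where "G = max 1 B"
  have G1: "1 \<le> G" using G_def by simp
  have gG: "g j t \<le> G" if "t \<in> T" "j < m" for j t
  proof -
    have "g j t \<le> \<bar>g j t\<bar>" by simp
    also have "\<dots> \<le> (\<Sum>j<m. \<bar>g j t\<bar>)" by (rule member_le_sum) (use that in auto)
    also have "\<dots> \<le> B" using B that by auto
    finally show ?thesis using G_def by simp
  qed
  obtain R where R: "\<forall>t\<in>T. norm t \<le> R"
    using compact_imp_bounded[OF T_compact] bounded_iff by auto
  have lowbound: "exp (-(F t + K + real m * ln G)) \<le> g j t" if "t \<in> D" "j < m" for t j
  proof -
    have tT: "t \<in> T" using that DT by auto
    have gp: "\<forall>i<m. 0 < g i t" using that D_def by auto
    have nn: "0 \<le> - ln (g i t) + ln G" if "i \<in> {..<m}" for i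
      using gp gG[OF tT] that by (simp add: ln_mono)
    have "- ln (g j t) + ln G \<le> (\<Sum>i<m. - ln (g i t) + ln G)"
      by (rule member_le_sum[where f="\<lambda>i. - ln (g i t) + ln G"]) (use that nn in auto)
    also have "\<dots> = (\<Sum>i<m. - ln (g i t)) + real m * ln G" by (simp add: sum.distrib del: uminus_add_conv_diff)
    finally have "- ln (g j t) \<le> (\<Sum>i<m. - ln (g i t)) + real m * ln G - ln G" by simp
    moreover have "0 \<le> ln G" using G1 by simp
    moreover have "- K \<le> JR t" using K tT by auto
    ultimately have "- ln (g j t) \<le> F t + K + real m * ln G" using FD[OF that(1)] by linarith
    then have "exp (-(F t + K + real m * ln G)) \<le> exp (ln (g j t))" by simp
    then show ?thesis using gp that by simp
  qed
  define d where "d = F' \<theta> p"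
  have dneg: "d < 0" using descent dH d_def by simp
  have pnz: "p \<noteq> 0"
  proof
    assume "p = 0"
    have "linear (F' \<theta>)" using deriv[OF thetaD] has_derivative_linear by blast
    then have "F' \<theta> 0 = 0" by (rule linear_0)
    then show False using dneg d_def \<open>p = 0\<close> by simp
  qed
  define \<psi> where "\<psi> = (\<lambda>\<alpha>. F (\<theta> + \<alpha> *\<^sub>R p) - (F \<theta> + c1 * \<alpha> * d))"
  have psider: "(\<psi> has_real_derivative F' (\<theta> + \<alpha> *\<^sub>R p) p - c1 * d) (at \<alpha>)"
    if "\<theta> + \<alpha> *\<^sub>R p \<in> D" for \<alpha>
    unfolding \<psi>_def by (auto intro!: derivative_eq_intros phider[OF that])
  have psicont: "isCont \<psi> \<alpha>" if "\<theta> + \<alpha> *\<^sub>R p \<in> D" for \<alpha>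
    using psider[OF that] DERIV_isCont by blast
  define I where "I = {\<alpha>. 0 \<le> \<alpha> \<and> (\<forall>\<beta>\<in>{0..\<alpha>}. \<theta> + \<beta> *\<^sub>R p \<in> D \<and> \<psi> \<beta> \<le> 0)}"
  have I0: "0 \<in> I" using thetaD unfolding I_def \<psi>_def by auto
  have bdd: "bdd_above I"
  proof (rule bdd_aboveI)
    fix \<alpha> assume "\<alpha> \<in> I"
    then have a0: "0 \<le> \<alpha>" and "\<theta> + \<alpha> *\<^sub>R p \<in> D" unfolding I_def by auto
    then have "\<theta> + \<alpha> *\<^sub>R p \<in> T" using DT by auto
    then have "norm (\<theta> + \<alpha> *\<^sub>R p) \<le> R" using R by auto
    moreover have "norm \<theta> \<le> R" using R thetaD DT by auto
    moreover have "norm (\<alpha> *\<^sub>R p) \<le> norm (\<theta> + \<alpha> *\<^sub>R p) + norm \<theta>"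
      using norm_triangle_ineq4[of "\<theta> + \<alpha> *\<^sub>R p" \<theta>] by simp
    ultimately have "\<alpha> * norm p \<le> 2 * R" using a0 by simp
    then show "\<alpha> \<le> 2 * R / norm p" using pnz by (simp add: field_simps)
  qed
  define a where "a = Sup I"
  have apos: "0 < a"
  proof -
    have "(\<psi> has_real_derivative (1 - c1) * d) (at 0)"
      using psider[of 0] thetaD d_def by (simp add: algebra_simps)
    moreover have "(1 - c1) * d < 0" using c dneg by (simp add: mult_pos_neg)
    ultimately obtain e1 where e1: "e1 > 0" "\<forall>h>0. h < e1 \<longrightarrow> \<psi> (0 + h) < \<psi> 0"
      using DERIV_neg_dec_right by blast
    obtain r where r: "r > 0" "ball \<theta> r \<subseteq> D" using openD thetaD open_contains_ball by blast
    define e where "e = min e1 (r / norm p) / 2"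
    have "r / norm p > 0" using r pnz by simp
    then have epos: "e > 0" using e1 e_def by simp
    have "e \<in> I" unfolding I_def
    proof (intro CollectI conjI ballI)
      show "0 \<le> e" using epos by simp
      fix \<beta> assume b: "\<beta> \<in> {0..e}"
      have "\<beta> < r / norm p" using b e_def epos r pnz by auto
      then have "norm (\<beta> *\<^sub>R p) < r" using b pnz by (simp add: field_simps)
      then show "\<theta> + \<beta> *\<^sub>R p \<in> D" using r by (auto simp: dist_norm)
      show "\<psi> \<beta> \<le> 0"
      proof (cases "\<beta> = 0")
        case True then show ?thesis unfolding \<psi>_def by simp
      next
        case False
        then have "\<beta> > 0" "\<beta> < e1" using b e_def epos by auto
        then have "\<psi> \<beta> < \<psi> 0" using e1 by auto
        then show ?thesis unfolding \<psi>_def by simp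
      qed
    qed
    then have "e \<le> a" unfolding a_def using bdd by (rule cSup_upper)
    then show ?thesis using epos by simp
  qed
  have below: "\<theta> + \<beta> *\<^sub>R p \<in> D \<and> \<psi> \<beta> \<le> 0" if hb: "0 \<le> \<beta>" "\<beta> < a" for \<beta>
  proof -
    obtain \<alpha> where "\<alpha> \<in> I" "\<beta> < \<alpha>" using less_cSup_iff[of I \<beta>] I0 bdd hb a_def by auto
    then show ?thesis using hb unfolding I_def by auto
  qed
  have evleft: "\<forall>\<^sub>F \<beta> in at_left a. 0 < \<beta> \<and> \<beta> < a"
    using eventually_at_left_real[OF apos] by simp
  have lineT: "((\<lambda>\<beta>. \<theta> + \<beta> *\<^sub>R p) \<longlongrightarrow> \<theta> + a *\<^sub>R p) (at_left a)"
    by (auto intro!: tendsto_intros)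
  have aT: "\<theta> + a *\<^sub>R p \<in> T"
  proof (rule Lim_in_closed_set[OF compact_imp_closed[OF T_compact] _ trivial_limit_at_left_real lineT])
    show "\<forall>\<^sub>F \<beta> in at_left a. \<theta> + \<beta> *\<^sub>R p \<in> T"
      using evleft by eventually_elim (use below DT in auto)
  qed
  define M where "M = F \<theta> + K + real m * ln G"
  have aD: "\<theta> + a *\<^sub>R p \<in> D"
  proof -
    have aU: "\<theta> + a *\<^sub>R p \<in> U" using aT TU by auto
    have "exp (- M) \<le> g j (\<theta> + a *\<^sub>R p)" if j: "j < m" for j
    proof (rule tendsto_lowerbound[OF isCont_tendsto_compose[OF gcont[OF j aU] lineT] _ trivial_limit_at_left_real])
      show "\<forall>\<^sub>F \<beta> in at_left a. exp (- M) \<le> g j (\<theta> + \<beta> *\<^sub>R p)"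
        using evleft
      proof eventually_elim
        case (elim \<beta>)
        then have bD: "\<theta> + \<beta> *\<^sub>R p \<in> D" and ps: "\<psi> \<beta> \<le> 0" using below by auto
        have "c1 * \<beta> * d \<le> 0" using c elim dneg by (simp add: mult_nonneg_nonpos)
        then have "F (\<theta> + \<beta> *\<^sub>R p) \<le> F \<theta>" using ps unfolding \<psi>_def by simp
        then have "exp (- M) \<le> exp (-(F (\<theta> + \<beta> *\<^sub>R p) + K + real m * ln G))" unfolding M_def by simp
        also have "\<dots> \<le> g j (\<theta> + \<beta> *\<^sub>R p)" using lowbound[OF bD j] .
        finally show ?case .
      qed
    qed
    then have "\<forall>j<m. 0 < g j (\<theta> + a *\<^sub>R p)" using exp_gt_zero less_le_trans by blast
    then show ?thesis using aU D_def by auto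
  qed
  have psia: "\<psi> a \<le> 0"
  proof (rule tendsto_upperbound[OF isCont_tendsto_compose[OF psicont[OF aD] tendsto_ident_at] _ trivial_limit_at_left_real])
    show "\<forall>\<^sub>F \<beta> in at_left a. \<psi> \<beta> \<le> 0" using evleft by eventually_elim (use below in auto)
  qed
  have aI: "\<forall>\<beta>\<in>{0..a}. \<theta> + \<beta> *\<^sub>R p \<in> D \<and> \<psi> \<beta> \<le> 0"
  proof
    fix \<beta> assume "\<beta> \<in> {0..a}"
    then show "\<theta> + \<beta> *\<^sub>R p \<in> D \<and> \<psi> \<beta> \<le> 0" using below aD psia
      by (cases "\<beta> = a") auto
  qed
  have psia0: "\<psi> a = 0"
  proof (rule ccontr)
    assume "\<psi> a \<noteq> 0"
    then have neg: "\<psi> a < 0" using psia by simp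
    have lin2: "((\<lambda>\<beta>. \<theta> + \<beta> *\<^sub>R p) \<longlongrightarrow> \<theta> + a *\<^sub>R p) (at a)"
      by (auto intro!: tendsto_intros)
    have ev1: "\<forall>\<^sub>F \<beta> in at a. \<theta> + \<beta> *\<^sub>R p \<in> D"
      using topological_tendstoD[OF lin2 openD aD] .
    have ev2: "\<forall>\<^sub>F \<beta> in at a. \<psi> \<beta> < 0"
      using order_tendstoD(2)[OF isCont_tendsto_compose[OF psicont[OF aD] tendsto_ident_at] neg] .
    have "\<forall>\<^sub>F \<beta> in at a. \<theta> + \<beta> *\<^sub>R p \<in> D \<and> \<psi> \<beta> < 0" using ev1 ev2 by eventually_elim auto
    then obtain \<delta> where \<delta>: "\<delta> > 0" "\<forall>\<beta>. \<beta> \<noteq> a \<and> dist \<beta> a < \<delta> \<longrightarrow> \<theta> + \<beta> *\<^sub>R p \<in> D \<and> \<psi> \<beta> < 0"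
      unfolding eventually_at by auto
    have "a + \<delta> / 2 \<in> I" unfolding I_def
    proof (intro CollectI conjI ballI)
      show "0 \<le> a + \<delta> / 2" using apos \<delta> by simp
      fix \<beta> assume b: "\<beta> \<in> {0..a + \<delta> / 2}"
      have hh: "\<theta> + \<beta> *\<^sub>R p \<in> D \<and> \<psi> \<beta> \<le> 0"
      proof (cases "\<beta> \<le> a")
        case True then show ?thesis using aI b by auto
      next
        case False
        then have "\<beta> \<noteq> a \<and> dist \<beta> a < \<delta>" using b \<delta> by (auto simp: dist_real_def)
        then show ?thesis using \<delta> by (auto simp: less_imp_le)
      qed
      then show "\<theta> + \<beta> *\<^sub>R p \<in> D" by simp
      show "\<psi> \<beta> \<le> 0" using hh by simp
    qed
    then have "a + \<delta> / 2 \<le> a" unfolding a_def using bdd by (rule cSup_upper)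
    then show False using \<delta> by simp
  qed
  have "\<exists>z>0. z < a \<and> (\<psi> has_real_derivative 0) (at z)"
  proof (rule Rolle)
    show "0 < a" by (rule apos)
    show "\<psi> 0 = \<psi> a" using psia0 unfolding \<psi>_def by simp
    show "continuous_on {0..a} \<psi>"
      using aI psicont by (auto intro!: continuous_at_imp_continuous_on)
    fix x assume "0 < x" "x < a"
    then have "\<theta> + x *\<^sub>R p \<in> D" using below by auto
    then show "\<psi> differentiable at x" using psider real_differentiable_def by blast
  qed
  then obtain z where z: "0 < z" "z < a" "(\<psi> has_real_derivative 0) (at z)" by blast
  have zD: "\<theta> + z *\<^sub>R p \<in> D" and psiz: "\<psi> z \<le> 0" using below z by auto
  have "F' (\<theta> + z *\<^sub>R p) p - c1 * d = 0" using DERIV_unique[OF psider[OF zD] z(3)] .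
  then have dz: "F' (\<theta> + z *\<^sub>R p) p = c1 * d" by simp
  have H1: "Hk L f C N x0k g m (\<theta> + z *\<^sub>R p) = ereal (F (\<theta> + z *\<^sub>R p))"
    using HkD[OF zD] FD[OF zD] by simp
  have H0: "Hk L f C N x0k g m \<theta> = ereal (F \<theta>)"
    using HkD[OF thetaD] FD[OF thetaD] by simp
  have "F (\<theta> + z *\<^sub>R p) \<le> F \<theta> + c1 * z * d" using psiz unfolding \<psi>_def by simp
  then have W1: "Hk L f C N x0k g m (\<theta> + z *\<^sub>R p)
             \<le> Hk L f C N x0k g m \<theta> + ereal (c1 * z * dHk L f C N x0k g m \<theta> p)"
    using H1 H0 dH d_def by simp
  have "c2 * d \<le> c1 * d" using c dneg by (simp add: mult_right_mono_neg)
  then have W2: "dHk L f C N x0k g m (\<theta> + z *\<^sub>R p) p \<ge> c2 * dHk L f C N x0k g m \<theta> p"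
    using dz dH d_def by simp
  show ?thesis using z(1) W1 W2 by blast
qed
end
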